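(* Let $r\in\mathbb{R}$, $k\geq 0$, $f(x)=x^2\exp(r-x)+k$ and $c=2$. If \[ f^2(c)<f^3(c)<c<f(c), \] then $f$, regarded as a self-map of the compact interval $[f^2(c),f(c)]$, is chaotic in the sense of Li and Yorke, in the sense of Block and Coppel, and in the sense of Devaney.
   Context: Let $X$ be a compact metric space and $f\colon X\to X$ continuous. (Li–Yorke) $f$ is L/Y-chaotic if there is an uncountable $S\subset X$ such that for all $x\neq y$ in $S$: $\limsup_n d(f^n x,f^n y)>0$ and $\liminf_n d(f^n x,f^n y)=0$, and for all $x\in S$ and all periodic $p\in X$: $\limsup_n d(f^n x,f^n p)>0$. (Block–Coppel) $f$ is B/C-chaotic if there are $m\in\mathbb{N}$ and a compact $f^m$-invariant $Y\subset X$ and a continuous surjection $h\colon Y\to\Sigma$ with $h\circ f^m=\sigma\circ h$ on $Y$, where $\Sigma=\{0,1\}^{\mathbb{N}}$ with metric $d(\alpha,\beta)=\sum_{i\ge0}|a_i-b_i|/2^i$ and $\sigma$ is the shift $(a_0a_1a_2\dots)\mapsto(a_1a_2\dots)$. (Devaney) $f$ is D-chaotic if there is a compact invariant $Y\subset X$ such that $f|_Y$ is topologically transitive, periodic points of $f|_Y$ are dense in $Y$, and $f|_Y$ has sensitive dependence on initial conditions. *)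

theory Defs
  imports "HOL-Analysis.Analysis" "HOL-Library.Liminf_Limsup"
begin

definition periodic_pt :: "('a \<Rightarrow> 'a) \<Rightarrow> 'a \<Rightarrow> bool" where
  "periodic_pt f p \<longleftrightarrow> (\<exists>m>0. (f ^^ m) p = p)"

definition LY_chaotic :: "'a::metric_space set \<Rightarrow> ('a \<Rightarrow> 'a) \<Rightarrow> bool" where
  "LY_chaotic X f \<longleftrightarrow>
     (\<exists>S\<subseteq>X. uncountable S \<and>
        (\<forall>x\<in>S. \<forall>y\<in>S. x \<noteq> y \<longrightarrow>
            limsup (\<lambda>n. ereal (dist ((f ^^ n) x) ((f ^^ n) y))) > 0 \<and>
            liminf (\<lambda>n. ereal (dist ((f ^^ n) x) ((f ^^ n) y))) = 0) \<and>
        (\<forall>x\<in>S. \<forall>p\<in>X. periodic_pt f p \<longrightarrow>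
            limsup (\<lambda>n. ereal (dist ((f ^^ n) x) ((f ^^ n) p))) > 0))"

definition sigma_dist :: "(nat \<Rightarrow> bool) \<Rightarrow> (nat \<Rightarrow> bool) \<Rightarrow> real" where
  "sigma_dist \<alpha> \<beta> = (\<Sum>i. (if \<alpha> i = \<beta> i then 0 else 1) / 2 ^ i)"

definition shift :: "(nat \<Rightarrow> bool) \<Rightarrow> (nat \<Rightarrow> bool)" where
  "shift \<alpha> = (\<lambda>i. \<alpha> (Suc i))"

definition BC_chaotic :: "'a::metric_space set \<Rightarrow> ('a \<Rightarrow> 'a) \<Rightarrow> bool" where
  "BC_chaotic X f \<longleftrightarrow>
     (\<exists>m::nat. m > 0 \<and> (\<exists>Y\<subseteq>X. compact Y \<and> (f ^^ m) ` Y \<subseteq> Y \<and>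
        (\<exists>h :: 'a \<Rightarrow> (nat \<Rightarrow> bool).
            (\<forall>y\<in>Y. \<forall>e>0. \<exists>d>0. \<forall>z\<in>Y. dist z y < d \<longrightarrow> sigma_dist (h z) (h y) < e) \<and>
            h ` Y = UNIV \<and>
            (\<forall>y\<in>Y. h ((f ^^ m) y) = shift (h y)))))"

definition D_chaotic :: "'a::metric_space set \<Rightarrow> ('a \<Rightarrow> 'a) \<Rightarrow> bool" where
  "D_chaotic X f \<longleftrightarrow>
     (\<exists>Y\<subseteq>X. Y \<noteq> {} \<and> compact Y \<and> f ` Y \<subseteq> Y \<and>
        (\<forall>U V. openin (top_of_set Y) U \<longrightarrow> openin (top_of_set Y) V \<longrightarrow>
               U \<noteq> {} \<longrightarrow> V \<noteq> {} \<longrightarrow> (\<exists>n>0. (f ^^ n) ` U \<inter> V \<noteq> {})) \<and>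
        Y \<subseteq> closure {p\<in>Y. periodic_pt f p} \<and>
        (\<exists>\<delta>>0. \<forall>x\<in>Y. \<forall>e>0. \<exists>y\<in>Y. \<exists>n. dist x y < e \<and>
               dist ((f ^^ n) x) ((f ^^ n) y) > \<delta>))"

end

theory Submission
  imports Defs "HOL-Library.Discrete_Functions"
begin


lemma isCont_funpow: fixes f :: "real \<Rightarrow> real" shows "(\<And>x. isCont f x) \<Longrightarrow> isCont (f ^^ n) x"
proof (induction n arbitrary: x)
  case 0
  have "(f ^^ 0) = (\<lambda>x. x)" by auto
  then show ?case by simp
next
  case (Suc n)
  have e: "(f ^^ Suc n) = (\<lambda>x. f ((f ^^ n) x))" by auto
  show ?case unfolding e by (rule isCont_o2[OF Suc.IH Suc.prems]) (rule Suc.prems)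
qed

definition monot :: "real set \<Rightarrow> (real \<Rightarrow> real) \<Rightarrow> bool" where
  "monot S \<phi> \<longleftrightarrow> (\<forall>x\<in>S. \<forall>y\<in>S. x \<le> y \<longrightarrow> \<phi> x \<le> \<phi> y) \<or> (\<forall>x\<in>S. \<forall>y\<in>S. x \<le> y \<longrightarrow> \<phi> y \<le> \<phi> x)"

lemma monot_comp:
  assumes m1: "monot S \<phi>" and im: "\<phi> ` S \<subseteq> T" and m2: "monot T \<psi>"
  shows "monot S (\<psi> \<circ> \<phi>)"
proof -
  have im': "\<And>x. x \<in> S \<Longrightarrow> \<phi> x \<in> T" using im by auto
  show ?thesis
  proof (cases "\<forall>x\<in>S. \<forall>y\<in>S. x \<le> y \<longrightarrow> \<phi> x \<le> \<phi> y")
    case a: True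
    show ?thesis
    proof (cases "\<forall>x\<in>T. \<forall>y\<in>T. x \<le> y \<longrightarrow> \<psi> x \<le> \<psi> y")
      case c: True
      have "\<forall>x\<in>S. \<forall>y\<in>S. x \<le> y \<longrightarrow> (\<psi> \<circ> \<phi>) x \<le> (\<psi> \<circ> \<phi>) y" using a c im' by simp
      then show ?thesis unfolding monot_def by blast
    next
      case False
      then have d: "\<forall>x\<in>T. \<forall>y\<in>T. x \<le> y \<longrightarrow> \<psi> y \<le> \<psi> x" using m2 unfolding monot_def by blast
      have "\<forall>x\<in>S. \<forall>y\<in>S. x \<le> y \<longrightarrow> (\<psi> \<circ> \<phi>) y \<le> (\<psi> \<circ> \<phi>) x" using a d im' by simp
      then show ?thesis unfolding monot_def by blast
    qed
  next
    case False
    then have b: "\<forall>x\<in>S. \<forall>y\<in>S. x \<le> y \<longrightarrow> \<phi> y \<le> \<phi> x" using m1 unfolding monot_def by blast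
    show ?thesis
    proof (cases "\<forall>x\<in>T. \<forall>y\<in>T. x \<le> y \<longrightarrow> \<psi> x \<le> \<psi> y")
      case c: True
      have "\<forall>x\<in>S. \<forall>y\<in>S. x \<le> y \<longrightarrow> (\<psi> \<circ> \<phi>) y \<le> (\<psi> \<circ> \<phi>) x" using b c im' by simp
      then show ?thesis unfolding monot_def by blast
    next
      case False
      then have d: "\<forall>x\<in>T. \<forall>y\<in>T. x \<le> y \<longrightarrow> \<psi> y \<le> \<psi> x" using m2 unfolding monot_def by blast
      have "\<forall>x\<in>S. \<forall>y\<in>S. x \<le> y \<longrightarrow> (\<psi> \<circ> \<phi>) x \<le> (\<psi> \<circ> \<phi>) y" using b d im' by simp
      then show ?thesis unfolding monot_def by blast
    qed
  qed
qed

lemma monot_sq: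
  assumes "monot S \<phi>" "\<phi> ` S \<subseteq> S" "x \<in> S" "y \<in> S" "x \<le> y"
  shows "\<phi> (\<phi> x) \<le> \<phi> (\<phi> y)"
proof -
  have xs: "\<phi> x \<in> S" "\<phi> y \<in> S" using assms by auto
  from assms(1) show ?thesis
  proof (unfold monot_def, elim disjE)
    assume m: "\<forall>x\<in>S. \<forall>y\<in>S. x \<le> y \<longrightarrow> \<phi> x \<le> \<phi> y"
    then show ?thesis using xs assms by blast
  next
    assume m: "\<forall>x\<in>S. \<forall>y\<in>S. x \<le> y \<longrightarrow> \<phi> y \<le> \<phi> x"
    then have "\<phi> y \<le> \<phi> x" using assms by blast
    then show ?thesis using m xs by blast
  qed
qed

lemma monot_between:
  assumes "monot S \<phi>" "x \<in> S" "z \<in> S" "t \<in> S" "min x z \<le> t" "t \<le> max x z"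
  shows "min (\<phi> x) (\<phi> z) \<le> \<phi> t \<and> \<phi> t \<le> max (\<phi> x) (\<phi> z)"
proof -
  have o: "x \<le> t \<and> t \<le> z \<or> z \<le> t \<and> t \<le> x" using assms(5,6) by linarith
  from assms(1) have "(\<phi> x \<le> \<phi> t \<or> \<phi> z \<le> \<phi> t) \<and> (\<phi> t \<le> \<phi> x \<or> \<phi> t \<le> \<phi> z)"
    unfolding monot_def
  proof (elim disjE)
    assume m: "\<forall>x\<in>S. \<forall>y\<in>S. x \<le> y \<longrightarrow> \<phi> x \<le> \<phi> y"
    from o show ?thesis
    proof (elim disjE conjE)
      assume "x \<le> t" "t \<le> z" then show ?thesis using m assms(2-4) by blast
    next
      assume "z \<le> t" "t \<le> x" then show ?thesis using m assms(2-4) by blast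
    qed
  next
    assume m: "\<forall>x\<in>S. \<forall>y\<in>S. x \<le> y \<longrightarrow> \<phi> y \<le> \<phi> x"
    from o show ?thesis
    proof (elim disjE conjE)
      assume "x \<le> t" "t \<le> z" then show ?thesis using m assms(2-4) by blast
    next
      assume "z \<le> t" "t \<le> x" then show ?thesis using m assms(2-4) by blast
    qed
  qed
  then show ?thesis unfolding min_le_iff_disj le_max_iff_disj .
qed

lemma uncountable_seqs: "uncountable (UNIV :: (nat \<Rightarrow> bool) set)"
proof
  assume c: "countable (UNIV :: (nat \<Rightarrow> bool) set)"
  define F where "F = from_nat_into (UNIV :: (nat \<Rightarrow> bool) set)"
  have r: "range F = UNIV" unfolding F_def using c by simp
  define d where "d = (\<lambda>n. \<not> F n n)"
  have "d \<in> range F" using r by simp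
  then obtain n where "d = F n" by blast
  then have "F n n = d n" by simp
  then show False unfolding d_def by simp
qed

lemma uncountable_cyl: fixes w :: "nat \<Rightarrow> bool" shows "uncountable {\<beta>::nat\<Rightarrow>bool. \<forall>i<L. \<beta> i = w i}"
proof
  assume c: "countable {\<beta>::nat\<Rightarrow>bool. \<forall>i<L. \<beta> i = w i}"
  define E where "E = (\<lambda>\<gamma>::nat\<Rightarrow>bool. \<lambda>i. if i < L then w i else \<gamma> (i - L))"
  have "inj E"
  proof (rule injI)
    fix x y assume e: "E x = E y"
    show "x = y"
    proof (rule ext)
      fix i
      have "E x (i + L) = E y (i + L)" using e by simp
      then show "x i = y i" unfolding E_def by simp
    qed
  qed
  moreover have "range E \<subseteq> {\<beta>. \<forall>i<L. \<beta> i = w i}" unfolding E_def by auto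
  then have "countable (range E)" using c by (rule countable_subset)
  ultimately have "countable (UNIV :: (nat \<Rightarrow> bool) set)"
    by (intro countable_image_inj_on[of E UNIV])
  then show False using uncountable_seqs by simp
qed

lemma cyl_avoid:
  fixes w :: "nat \<Rightarrow> bool"
  assumes "countable C"
  shows "\<exists>\<beta>. (\<forall>i<L. \<beta> i = w i) \<and> \<beta> \<notin> C"
proof -
  have "uncountable ({\<beta>::nat\<Rightarrow>bool. \<forall>i<L. \<beta> i = w i} - C)"
    by (rule uncountable_minus_countable[OF uncountable_cyl assms])
  then have "{\<beta>::nat\<Rightarrow>bool. \<forall>i<L. \<beta> i = w i} - C \<noteq> {}"
    using countable_empty by metis
  then obtain \<beta> where "\<beta> \<in> {\<beta>::nat\<Rightarrow>bool. \<forall>i<L. \<beta> i = w i} - C" by blast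
  then show ?thesis by blast
qed

definition EPs :: "(nat \<Rightarrow> bool) \<Rightarrow> bool" where
  "EPs \<alpha> \<longleftrightarrow> (\<exists>N P. 0 < P \<and> (\<forall>i\<ge>N. \<alpha> (i + P) = \<alpha> i))"

lemma countable_EP: "countable {\<alpha>. EPs \<alpha>}"
proof -
  have c: "countable {\<alpha>::nat\<Rightarrow>bool. \<forall>i\<ge>N. \<alpha> (i + P) = \<alpha> i}" if "0 < P" for N P
  proof -
    let ?E = "{\<alpha>::nat\<Rightarrow>bool. \<forall>i\<ge>N. \<alpha> (i + P) = \<alpha> i}"
    have "inj_on (\<lambda>\<alpha>. map \<alpha> [0..<N+P]) ?E"
    proof (rule inj_onI)
      fix x y assume x: "x \<in> ?E" and y: "y \<in> ?E" and e: "map x [0..<N+P] = map y [0..<N+P]"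
      have "x i = y i" for i
      proof (induction i rule: less_induct)
        case (less i)
        show ?case
        proof (cases "i < N + P")
          case True
          then show ?thesis using e by (metis diff_zero length_upt map_eq_conv nth_upt plus_nat.add_0 nth_map length_map)
        next
          case False
          then have i: "i = (i - P) + P" "i - P \<ge> N" "i - P < i" using that by auto
          then have "x i = x (i - P)" using x by (metis (mono_tags, lifting) mem_Collect_eq)
          also have "\<dots> = y (i - P)" using less i by simp
          also have "\<dots> = y i" using y i by (metis (mono_tags, lifting) mem_Collect_eq)
          finally show ?thesis .
        qed
      qed
      then show "x = y" by auto
    qed
    then show ?thesis by (rule countable_image_inj_on[rotated]) simp
  qed
  have "{\<alpha>. EPs \<alpha>} \<subseteq> (\<Union>NP\<in>{NP. 0 < snd NP}. {\<alpha>::nat\<Rightarrow>bool. \<forall>i\<ge>fst NP. \<alpha> (i + snd NP) = \<alpha> i})"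
  proof
    fix \<alpha> assume "\<alpha> \<in> {\<alpha>. EPs \<alpha>}"
    then obtain N P where "0 < P" "\<forall>i\<ge>N. \<alpha> (i + P) = \<alpha> i" by (auto simp: EPs_def)
    then show "\<alpha> \<in> (\<Union>NP\<in>{NP. 0 < snd NP}. {\<alpha>::nat\<Rightarrow>bool. \<forall>i\<ge>fst NP. \<alpha> (i + snd NP) = \<alpha> i})"
      by (intro UN_I[of "(N,P)"]) auto
  qed
  moreover have "countable (\<Union>NP\<in>{NP. 0 < snd NP}. {\<alpha>::nat\<Rightarrow>bool. \<forall>i\<ge>fst NP. \<alpha> (i + snd NP) = \<alpha> i})"
  proof (rule countable_UN)
    show "countable {NP::nat\<times>nat. 0 < snd NP}" by (rule countableI_type)
  next
    fix NP :: "nat \<times> nat" assume "NP \<in> {NP. 0 < snd NP}"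
    then show "countable {\<alpha>::nat\<Rightarrow>bool. \<forall>i\<ge>fst NP. \<alpha> (i + snd NP) = \<alpha> i}" using c by simp
  qed
  ultimately show ?thesis by (rule countable_subset)
qed

lemma limsup_pos:
  fixes F :: "nat \<Rightarrow> real"
  assumes "0 < d" "\<And>N. \<exists>n\<ge>N. d \<le> F n"
  shows "0 < limsup (\<lambda>n. ereal (F n))"
proof -
  have "ereal d \<le> limsup (\<lambda>n. ereal (F n))"
    unfolding limsup_INF_SUP
  proof (rule INF_greatest)
    fix N :: nat
    obtain n where n: "n \<ge> N" "d \<le> F n" using assms by blast
    have "ereal (F n) \<le> (SUP m\<in>{N..}. ereal (F m))"
      by (rule SUP_upper) (use n in simp)
    then show "ereal d \<le> (SUP m\<in>{N..}. ereal (F m))"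
      using n(2) by (meson ereal_less_eq(3) order_trans)
  qed
  moreover have "0 < ereal d" using assms(1) by simp
  ultimately show ?thesis by (rule order_less_le_trans[rotated])
qed

lemma liminf_zero:
  fixes F :: "nat \<Rightarrow> real"
  assumes "\<And>n. 0 \<le> F n" "\<And>e N. 0 < e \<Longrightarrow> \<exists>n\<ge>N. F n < e"
  shows "liminf (\<lambda>n. ereal (F n)) = 0"
proof -
  have le: "liminf (\<lambda>n. ereal (F n)) \<le> ereal e" if e0: "0 < e" for e
    unfolding liminf_SUP_INF
  proof (rule SUP_least)
    fix N :: nat
    obtain n where n: "n \<ge> N" "F n < e" using assms(2)[OF e0] by blast
    have "(INF m\<in>{N..}. ereal (F m)) \<le> ereal (F n)"
      by (rule INF_lower) (use n in simp)
    then show "(INF m\<in>{N..}. ereal (F m)) \<le> ereal e"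
      using n(2) by (meson ereal_less_eq(3) less_imp_le order_trans)
  qed
  have "0 \<le> (INF m\<in>{0..}. ereal (F m))"
    by (rule INF_greatest) (simp add: assms(1))
  also have "\<dots> \<le> liminf (\<lambda>n. ereal (F n))"
    unfolding liminf_SUP_INF by (rule SUP_upper) simp
  finally have ge: "0 \<le> liminf (\<lambda>n. ereal (F n))" .
  have "liminf (\<lambda>n. ereal (F n)) \<le> 0"
  proof (rule ereal_le_epsilon2)
    fix e :: real assume "0 < e"
    then show "liminf (\<lambda>n. ereal (F n)) \<le> 0 + ereal e" using le[of e] by simp
  qed
  then show ?thesis using ge by (rule antisym)
qed




locale hs =
  fixes f :: "real \<Rightarrow> real" and u p v :: real
  assumes contf: "\<And>x. isCont f x"
    and up: "u < p" and pv: "p < v"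
    and cov0: "{u..v} \<subseteq> (f^^2) ` {u..p}"
    and cov1: "{u..v} \<subseteq> (f^^2) ` {p..v}"
    and pout: "(f^^2) p \<notin> {u..v}"
    and mono0: "\<And>x y. u \<le> x \<Longrightarrow> x \<le> y \<Longrightarrow> y \<le> p \<Longrightarrow> (f^^2) x \<le> (f^^2) y"
    and mono1: "\<And>x y. p \<le> x \<Longrightarrow> x \<le> y \<Longrightarrow> y \<le> v \<Longrightarrow> (f^^2) y \<le> (f^^2) x"
begin

definition g where "g = f ^^ 2"
definition J :: "bool \<Rightarrow> real set" where "J b = (if b then {p..v} else {u..p})"
definition Y where "Y = {x. \<forall>i. (g^^i) x \<in> {u..v}}"
definition h where "h x = (\<lambda>i. (g^^i) x \<in> {p..v})"
definition fib where "fib \<alpha> = {x. \<forall>i. (g^^i) x \<in> J (\<alpha> i)}"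

lemma contg: "isCont g x"
  unfolding g_def by (rule isCont_funpow[OF contf])

lemma contgn: "isCont (g^^n) x"
  by (rule isCont_funpow[OF contg])

lemma gn_f: "(g^^n) = f^^(2*n)"
  unfolding g_def by (simp add: funpow_mult mult.commute)

lemma gn_Suc: "(g^^(Suc n)) x = (g^^n) (g x)"
  by (simp add: funpow_Suc_right del: funpow.simps)

lemma gn_add: "(g^^(n+m)) x = (g^^n) ((g^^m) x)"
  by (simp add: funpow_add)

lemma J_sub: "J b \<subseteq> {u..v}"
  unfolding J_def using up pv by auto

lemma J_ne: "J b \<noteq> {}"
  unfolding J_def using up pv by auto

lemma J_closed: "closed (J b)"
  unfolding J_def by auto

lemma covJ: "{u..v} \<subseteq> g ` J b"
  unfolding J_def g_def using cov0 cov1 by auto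

lemma Y_sub: "Y \<subseteq> {u..v}"
proof
  fix x assume "x \<in> Y"
  then have "(g^^0) x \<in> {u..v}" unfolding Y_def by blast
  then show "x \<in> {u..v}" by simp
qed

lemma closed_Y: "closed Y"
proof -
  have "Y = (\<Inter>i. (g^^i) -` {u..v})" unfolding Y_def by auto
  also have "closed \<dots>"
    by (intro closed_INT ballI continuous_closed_vimage) (auto simp: contgn)
  finally show ?thesis .
qed

lemma compact_Y: "compact Y"
  using closed_Y Y_sub by (meson bounded_closed_interval bounded_subset compact_eq_bounded_closed)

lemma gY: "x \<in> Y \<Longrightarrow> g x \<in> Y"
  unfolding Y_def by (auto simp: gn_Suc[symmetric] simp del: funpow.simps)

lemma gnY: "x \<in> Y \<Longrightarrow> (g^^n) x \<in> Y"
  by (induction n) (auto simp: gY)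

lemma Y_not_p: "x \<in> Y \<Longrightarrow> x \<noteq> p"
proof
  assume "x \<in> Y" "x = p"
  then have "g p \<in> Y" using gY by blast
  then have "g p \<in> {u..v}" using Y_sub by blast
  then show False using pout unfolding g_def by blast
qed

lemma Y_gn_not_p: "x \<in> Y \<Longrightarrow> (g^^n) x \<noteq> p"
  using Y_not_p gnY by blast

lemma hJ: "x \<in> Y \<Longrightarrow> (g^^i) x \<in> J (h x i)"
proof -
  assume x: "x \<in> Y"
  then have "(g^^i) x \<in> {u..v}" unfolding Y_def by blast
  then show ?thesis unfolding J_def h_def by auto
qed

lemma fib_iff: "x \<in> fib \<alpha> \<longleftrightarrow> x \<in> Y \<and> h x = \<alpha>"
proof
  assume x: "x \<in> fib \<alpha>"
  then have xi: "\<And>i. (g^^i) x \<in> J (\<alpha> i)" unfolding fib_def by blast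
  have xY: "x \<in> Y" unfolding Y_def using xi J_sub by blast
  have "h x i = \<alpha> i" for i
  proof (cases "\<alpha> i")
    case True then show ?thesis using xi[of i] unfolding h_def J_def by simp
  next
    case False
    then have "(g^^i) x \<in> {u..p}" using xi[of i] unfolding J_def by simp
    moreover have "(g^^i) x \<noteq> p" using Y_gn_not_p[OF xY] .
    ultimately show ?thesis using False unfolding h_def by auto
  qed
  then show "x \<in> Y \<and> h x = \<alpha>" using xY by auto
next
  assume "x \<in> Y \<and> h x = \<alpha>"
  then show "x \<in> fib \<alpha>" unfolding fib_def using hJ by blast
qed

lemma h_shift: "h ((g^^n) x) i = h x (i + n)"
  unfolding h_def by (simp add: gn_add)

lemma h_g: "h (g x) = shift (h x)"
  unfolding h_def shift_def by (simp add: gn_Suc funpow_swap1)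

lemma closed_cyl: "closed {x. \<forall>i<n. (g^^i) x \<in> J (\<alpha> i)}"
proof -
  have "{x. \<forall>i<n. (g^^i) x \<in> J (\<alpha> i)} = (\<Inter>i\<in>{..<n}. (g^^i) -` J (\<alpha> i))" by auto
  also have "closed \<dots>"
    by (intro closed_INT ballI continuous_closed_vimage) (auto simp: contgn J_closed)
  finally show ?thesis .
qed

lemma cyl_image: "(g^^n) ` {x. \<forall>i\<le>n. (g^^i) x \<in> J (\<alpha> i)} = J (\<alpha> n)"
proof (induction n arbitrary: \<alpha>)
  case 0 then show ?case by auto
next
  case (Suc n)
  define \<beta> where "\<beta> = (\<lambda>i. \<alpha> (Suc i))"
  let ?A = "{x. \<forall>i\<le>n. (g^^i) x \<in> J (\<beta> i)}"
  let ?B = "{x. \<forall>i\<le>Suc n. (g^^i) x \<in> J (\<alpha> i)}"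
  have B: "?B = {x \<in> J (\<alpha> 0). g x \<in> ?A}"
  proof (intro set_eqI iffI)
    fix x assume "x \<in> ?B"
    then show "x \<in> {x \<in> J (\<alpha> 0). g x \<in> ?A}"
      unfolding \<beta>_def by (auto simp: gn_Suc[symmetric] simp del: funpow.simps)
  next
    fix x assume x: "x \<in> {x \<in> J (\<alpha> 0). g x \<in> ?A}"
    show "x \<in> ?B"
    proof (intro CollectI allI impI)
      fix i assume "i \<le> Suc n"
      show "(g^^i) x \<in> J (\<alpha> i)"
      proof (cases i)
        case 0 then show ?thesis using x by simp
      next
        case (Suc j)
        then show ?thesis using x \<open>i \<le> Suc n\<close> unfolding \<beta>_def
          by (auto simp: gn_Suc simp del: funpow.simps)
      qed
    qed
  qed
  have Asub: "?A \<subseteq> g ` J (\<alpha> 0)"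
  proof
    fix y assume "y \<in> ?A"
    then have "y \<in> J (\<beta> 0)" by (metis (no_types, lifting) funpow_0 le0 mem_Collect_eq)
    then show "y \<in> g ` J (\<alpha> 0)" using J_sub covJ by blast
  qed
  have "g ` ?B = ?A"
  proof
    show "g ` ?B \<subseteq> ?A" unfolding B by auto
  next
    show "?A \<subseteq> g ` ?B"
    proof
      fix y assume y: "y \<in> ?A"
      then obtain x where "x \<in> J (\<alpha> 0)" "g x = y" using Asub by blast
      then show "y \<in> g ` ?B" unfolding B using y by auto
    qed
  qed
  then have "(g^^n) ` g ` ?B = J (\<beta> n)" using Suc.IH by simp
  moreover have "(g^^Suc n) ` ?B = (g^^n) ` g ` ?B"
    by (auto simp: gn_Suc image_iff simp del: funpow.simps)
  ultimately show ?case unfolding \<beta>_def by simp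
qed

lemma cyl_ne: "{x. \<forall>i\<le>n. (g^^i) x \<in> J (\<alpha> i)} \<noteq> {}"
  using cyl_image[of n \<alpha>] J_ne[of "\<alpha> n"] by (metis image_empty)

lemma nest_point:
  fixes S :: "nat \<Rightarrow> real set"
  assumes "\<And>n. closed (S n)" "\<And>n. S n \<noteq> {}" "\<And>m n. m \<le> n \<Longrightarrow> S n \<subseteq> S m" "bounded (S 0)"
  obtains a where "\<And>n. a \<in> S n"
  using bounded_closed_nest[of S] assms by blast

lemma fib_ne: "fib \<alpha> \<noteq> {}"
proof -
  define S where "S n = {x. \<forall>i<Suc n. (g^^i) x \<in> J (\<alpha> i)}" for n
  have ne: "S n \<noteq> {}" for n
    using cyl_ne[of n \<alpha>] unfolding S_def by (simp add: less_Suc_eq_le)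
  have cl: "closed (S n)" for n unfolding S_def by (rule closed_cyl)
  have mo: "m \<le> n \<Longrightarrow> S n \<subseteq> S m" for m n unfolding S_def by auto
  have bd: "bounded (S 0)"
  proof -
    have "S 0 \<subseteq> {u..v}" unfolding S_def using J_sub by auto
    then show ?thesis by (meson bounded_closed_interval bounded_subset)
  qed
  obtain a where a: "\<And>n. a \<in> S n" using nest_point[of S, OF cl ne mo bd] by blast
  have "a \<in> fib \<alpha>" unfolding fib_def
  proof (intro CollectI allI)
    fix i show "(g^^i) a \<in> J (\<alpha> i)" using a[of i] unfolding S_def by simp
  qed
  then show ?thesis by auto
qed

lemma Y_ne: "Y \<noteq> {}"
  using fib_ne[of "\<lambda>_. True"] fib_iff by blast

lemma h_surj: "h ` Y = UNIV"
proof -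
  have "\<alpha> \<in> h ` Y" for \<alpha>
  proof -
    obtain x where "x \<in> fib \<alpha>" using fib_ne by blast
    then show ?thesis using fib_iff by (metis image_eqI)
  qed
  then show ?thesis by blast
qed

end



lemma sigma_bound:
  assumes "\<forall>i<N. \<alpha> i = \<beta> i"
  shows "sigma_dist \<alpha> \<beta> \<le> 2 * (1/2)^N"
proof -
  define a where "a i = (if \<alpha> i = \<beta> i then 0 else 1) / (2::real) ^ i" for i
  have a_le: "a i \<le> (1/2)^i" for i unfolding a_def by (simp add: power_one_over)
  have a_ge: "0 \<le> a i" for i unfolding a_def by simp
  have gs: "(\<lambda>i. (1/2::real)^i) sums 2"
    using geometric_sums[of "1/2::real"] by simp
  have sa: "summable a"
    by (rule summable_comparison_test[of _ "\<lambda>i. (1/2::real)^i"])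
       (use a_le a_ge gs in \<open>auto intro: sums_summable\<close>)
  have "suminf a = (\<Sum>i. a (i + N)) + (\<Sum>i<N. a i)"
    by (rule suminf_split_initial_segment[OF sa])
  also have "(\<Sum>i<N. a i) = 0" using assms unfolding a_def by simp
  also have "(\<Sum>i. a (i + N)) \<le> (\<Sum>i. (1/2)^N * (1/2::real)^i)"
  proof (rule suminf_le)
    fix i show "a (i + N) \<le> (1/2)^N * (1/2::real)^i"
      using a_le[of "i+N"] by (simp add: power_add mult.commute)
  next
    show "summable (\<lambda>i. a (i + N))" using sa by (simp add: summable_iff_shift)
  next
    show "summable (\<lambda>i. (1/2)^N * (1/2::real)^i)"
      using sums_summable[OF sums_mult[OF gs]] by simp
  qed
  also have "(\<Sum>i. (1/2)^N * (1/2::real)^i) = (1/2)^N * 2"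
    using sums_unique[OF sums_mult[OF gs, of "(1/2)^N"]] by simp
  finally show ?thesis unfolding sigma_dist_def a_def by simp
qed

context hs
begin

lemma sep_ex: "\<exists>\<delta>>0. \<forall>y\<in>Y. \<forall>z\<in>Y. h y 0 \<noteq> h z 0 \<longrightarrow> \<delta> \<le> dist y z"
proof -
  have "continuous_on Y (\<lambda>x. dist x p)" by (intro continuous_intros)
  then obtain y0 where y0: "y0 \<in> Y" "\<forall>y\<in>Y. dist y0 p \<le> dist y p"
    using continuous_attains_inf[OF compact_Y Y_ne] by blast
  have pos: "0 < dist y0 p" using Y_not_p[OF y0(1)] by simp
  have "\<forall>y\<in>Y. \<forall>z\<in>Y. h y 0 \<noteq> h z 0 \<longrightarrow> dist y0 p \<le> dist y z"
  proof (intro ballI impI)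
    fix y z assume y: "y \<in> Y" and z: "z \<in> Y" and d: "h y 0 \<noteq> h z 0"
    have yr: "y \<in> {u..v}" "z \<in> {u..v}" using y z Y_sub by auto
    have a: "dist y0 p \<le> dist y p" "dist y0 p \<le> dist z p" using y0 y z by auto
    have "(y \<in> {p..v}) \<noteq> (z \<in> {p..v})" using d unfolding h_def by simp
    then have "(p \<le> y \<and> z < p) \<or> (p \<le> z \<and> y < p)" using yr by auto
    then show "dist y0 p \<le> dist y z" using a unfolding dist_real_def by auto
  qed
  then show ?thesis using pos by blast
qed

definition \<delta> where "\<delta> = (SOME \<delta>. \<delta> > 0 \<and> (\<forall>y\<in>Y. \<forall>z\<in>Y. h y 0 \<noteq> h z 0 \<longrightarrow> \<delta> \<le> dist y z))"

lemma delta_pos: "0 < \<delta>" and delta_sep: "y \<in> Y \<Longrightarrow> z \<in> Y \<Longrightarrow> h y 0 \<noteq> h z 0 \<Longrightarrow> \<delta> \<le> dist y z"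
  using someI_ex[OF sep_ex] unfolding \<delta>_def by blast+

lemma delta_sepn: "y \<in> Y \<Longrightarrow> z \<in> Y \<Longrightarrow> h y i \<noteq> h z i \<Longrightarrow> \<delta> \<le> dist ((g^^i) y) ((g^^i) z)"
  using delta_sep[of "(g^^i) y" "(g^^i) z"] gnY h_shift[of i _ 0] by simp

lemma h_cont: "y \<in> Y \<Longrightarrow> 0 < e \<Longrightarrow> \<exists>d>0. \<forall>z\<in>Y. dist z y < d \<longrightarrow> sigma_dist (h z) (h y) < e"
proof -
  assume y: "y \<in> Y" and e: "0 < e"
  obtain N where N: "(1/2::real)^N < e/2" using real_arch_pow_inv[of "e/2" "1/2"] e by auto
  have "\<forall>i\<in>{..<N}. eventually (\<lambda>z. dist ((g^^i) z) ((g^^i) y) < \<delta>) (at y)"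
    using contgn delta_pos by (auto intro: tendstoD simp: isCont_def)
  then have "eventually (\<lambda>z. \<forall>i\<in>{..<N}. dist ((g^^i) z) ((g^^i) y) < \<delta>) (at y)"
    by (intro eventually_ball_finite) auto
  then obtain d where d: "d > 0" "\<forall>z. z \<noteq> y \<and> dist z y < d \<longrightarrow> (\<forall>i\<in>{..<N}. dist ((g^^i) z) ((g^^i) y) < \<delta>)"
    unfolding eventually_at by auto
  have "\<forall>z\<in>Y. dist z y < d \<longrightarrow> sigma_dist (h z) (h y) < e"
  proof (intro ballI impI)
    fix z assume z: "z \<in> Y" "dist z y < d"
    have "\<forall>i<N. h z i = h y i"
    proof (cases "z = y")
      case False
      show ?thesis
      proof (intro allI impI)
        fix i assume "i < N"
        then have "dist ((g^^i) z) ((g^^i) y) < \<delta>" using d False z by auto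
        then show "h z i = h y i" using delta_sepn[OF z(1) y, of i] by linarith
      qed
    qed simp
    then have "sigma_dist (h z) (h y) \<le> 2 * (1/2)^N" by (rule sigma_bound)
    then show "sigma_dist (h z) (h y) < e" using N by linarith
  qed
  then show ?thesis using d by blast
qed

lemma BC: "Y \<subseteq> X \<Longrightarrow> BC_chaotic X f"
  unfolding BC_chaotic_def
proof (intro exI[of _ 2] conjI exI[of _ Y])
  assume "Y \<subseteq> X" then show "Y \<subseteq> X" .
  show "(0::nat) < 2" by simp
  show "compact Y" by (rule compact_Y)
  show "(f^^2) ` Y \<subseteq> Y" using gY unfolding g_def by auto
  show "\<exists>h. (\<forall>y\<in>Y. \<forall>e>0. \<exists>d>0. \<forall>z\<in>Y. dist z y < d \<longrightarrow> sigma_dist (h z) (h y) < e) \<and>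
        h ` Y = UNIV \<and> (\<forall>y\<in>Y. h ((f^^2) y) = shift (h y))"
    using h_cont h_surj h_g unfolding g_def by blast
qed

lemma monot_J: "monot (J b) g"
  unfolding monot_def J_def g_def using mono0 mono1 by (cases b) auto

lemma J_convex: "a \<in> J b \<Longrightarrow> c \<in> J b \<Longrightarrow> min a c \<le> t \<Longrightarrow> t \<le> max a c \<Longrightarrow> t \<in> J b"
  unfolding J_def by (cases b) (auto simp: min_def max_def split: if_splits)

lemma fib_convex:
  assumes x: "x \<in> fib \<alpha>" and z: "z \<in> fib \<alpha>" and t: "x \<le> t" "t \<le> z"
  shows "t \<in> fib \<alpha>"
proof -
  have xi: "(g^^i) x \<in> J (\<alpha> i)" and zi: "(g^^i) z \<in> J (\<alpha> i)" for i
    using x z unfolding fib_def by auto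
  have "min ((g^^i) x) ((g^^i) z) \<le> (g^^i) t \<and> (g^^i) t \<le> max ((g^^i) x) ((g^^i) z)" for i
  proof (induction i)
    case 0 then show ?case using t by simp
  next
    case (Suc i)
    then have "(g^^i) t \<in> J (\<alpha> i)" using J_convex[OF xi zi] by blast
    then show ?case using monot_between[OF monot_J xi zi] Suc by simp
  qed
  then have "(g^^i) t \<in> J (\<alpha> i)" for i using J_convex[OF xi zi] by blast
  then show ?thesis unfolding fib_def by blast
qed

definition Nset where "Nset = {\<alpha>. \<exists>x y. x \<in> fib \<alpha> \<and> y \<in> fib \<alpha> \<and> x < y}"

lemma countable_N: "countable Nset"
proof -
  define q where "q \<alpha> = (SOME r. r \<in> \<rat> \<and> r \<in> fib \<alpha>)" for \<alpha>
  have q: "q \<alpha> \<in> \<rat> \<and> q \<alpha> \<in> fib \<alpha>" if an: "\<alpha> \<in> Nset" for \<alpha>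
  proof -
    obtain x y where xy: "x \<in> fib \<alpha>" "y \<in> fib \<alpha>" "x < y" using an unfolding Nset_def by blast
    obtain r where r: "r \<in> \<rat>" "x < r" "r < y" using Rats_dense_in_real[OF xy(3)] by blast
    have "r \<in> fib \<alpha>" using fib_convex[OF xy(1,2)] r by simp
    then have "\<exists>r. r \<in> \<rat> \<and> r \<in> fib \<alpha>" using r by blast
    then show ?thesis unfolding q_def by (rule someI_ex)
  qed
  have "inj_on q Nset"
  proof (rule inj_onI)
    fix \<alpha> \<beta> assume a: "\<alpha> \<in> Nset" "\<beta> \<in> Nset" "q \<alpha> = q \<beta>"
    then have "q \<alpha> \<in> fib \<alpha>" "q \<alpha> \<in> fib \<beta>" using q by metis+
    then show "\<alpha> = \<beta>" using fib_iff by metis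
  qed
  moreover have "q ` Nset \<subseteq> \<rat>" using q by blast
  then have "countable (q ` Nset)" using countable_rat by (rule countable_subset)
  ultimately show ?thesis by (intro countable_image_inj_on[of q Nset])
qed

lemma fib_single: "\<alpha> \<notin> Nset \<Longrightarrow> \<exists>x. fib \<alpha> = {x}"
proof -
  assume n: "\<alpha> \<notin> Nset"
  obtain x where x: "x \<in> fib \<alpha>" using fib_ne by blast
  have "y = x" if "y \<in> fib \<alpha>" for y
  proof (rule ccontr)
    assume "y \<noteq> x"
    then have "x < y \<or> y < x" by linarith
    then show False using n x that unfolding Nset_def by blast
  qed
  then have "fib \<alpha> = {x}" using x by blast
  then show ?thesis by blast
qed

lemma cyl_close:
  assumes fx: "fib \<alpha> = {x0}" and e: "0 < e"
  shows "\<exists>L. \<forall>y\<in>Y. (\<forall>i<L. h y i = \<alpha> i) \<longrightarrow> dist y x0 < e"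
proof (rule ccontr)
  assume "\<not> ?thesis"
  then have ex: "\<forall>L. \<exists>y\<in>Y. (\<forall>i<L. h y i = \<alpha> i) \<and> e \<le> dist y x0" by (auto simp: not_less)
  define S where "S L = {x. \<forall>i<L. (g^^i) x \<in> J (\<alpha> i)} \<inter> (- ball x0 e) \<inter> {u..v}" for L
  have cl: "closed (S L)" for L unfolding S_def
    by (intro closed_Int closed_cyl) auto
  have ne: "S L \<noteq> {}" for L
  proof -
    obtain y where y: "y \<in> Y" "\<forall>i<L. h y i = \<alpha> i" "e \<le> dist y x0" using ex by blast
    have yi: "\<forall>i<L. (g^^i) y \<in> J (\<alpha> i)"
    proof (intro allI impI)
      fix i assume "i < L"
      then have "h y i = \<alpha> i" using y(2) by blast
      then show "(g^^i) y \<in> J (\<alpha> i)" using hJ[OF y(1), of i] by simp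
    qed
    have "y \<in> S L" unfolding S_def using y yi Y_sub by (auto simp: dist_commute)
    then show ?thesis by blast
  qed
  have mo: "m \<le> n \<Longrightarrow> S n \<subseteq> S m" for m n unfolding S_def by auto
  have bd: "bounded (S 0)"
    using bounded_subset[of "{u..v}" "S 0"] unfolding S_def by auto
  obtain a where a: "\<And>n. a \<in> S n" using nest_point[of S, OF cl ne mo bd] by blast
  have "a \<in> fib \<alpha>" unfolding fib_def
  proof (intro CollectI allI)
    fix i show "(g^^i) a \<in> J (\<alpha> i)" using a[of "Suc i"] unfolding S_def by simp
  qed
  then have "a = x0" using fx by blast
  moreover have "a \<notin> ball x0 e" using a[of 0] unfolding S_def by blast
  ultimately show False using e by simp
qed

lemma cyl_close_ge:
  assumes "fib \<alpha> = {x0}" "0 < e"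
  shows "\<exists>L\<ge>M. \<forall>y\<in>Y. (\<forall>i<L. h y i = \<alpha> i) \<longrightarrow> dist y x0 < e"
proof -
  obtain L where L: "\<forall>y\<in>Y. (\<forall>i<L. h y i = \<alpha> i) \<longrightarrow> dist y x0 < e"
    using cyl_close[OF assms] by blast
  show ?thesis
    by (rule exI[of _ "max L M"]) (use L in auto)
qed

end



definition Phi :: "(nat \<Rightarrow> bool) \<Rightarrow> (nat \<Rightarrow> bool) \<Rightarrow> nat \<Rightarrow> bool" where
  "Phi \<gamma> \<alpha> t = (if t < 2 then False else if t = 2 ^ floor_log t then \<alpha> (fst (prod_decode (floor_log t)))
      else \<gamma> (t - 2 ^ floor_log t - 1))"

lemma Phi_free: "1 \<le> j \<Longrightarrow> Phi \<gamma> \<alpha> (2^j) = \<alpha> (fst (prod_decode j))"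
proof -
  assume j: "1 \<le> j"
  have "(2::nat) ^ 1 \<le> 2 ^ j" using j by (intro power_increasing) auto
  then show ?thesis unfolding Phi_def by simp
qed

lemma Phi_blk:
  assumes j: "1 \<le> j" and i: "i < 2^j - 1"
  shows "Phi \<gamma> \<alpha> (2^j + 1 + i) = \<gamma> i"
proof -
  have p: "(2::nat) ^ 1 \<le> 2 ^ j" using j by (intro power_increasing) auto
  let ?t = "2^j + 1 + i"
  have fl: "floor_log ?t = j"
    by (rule floor_log_eqI) (use i p in auto)
  have "\<not> ?t < 2" using p by simp
  moreover have "?t \<noteq> 2 ^ j" by simp
  ultimately show ?thesis unfolding Phi_def fl by simp
qed

lemma Phi_diff:
  assumes "\<alpha> k \<noteq> \<beta> k"
  shows "\<exists>t\<ge>N. Phi \<gamma> \<alpha> t \<noteq> Phi \<gamma> \<beta> t"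
proof -
  define j where "j = prod_encode (k, N + 1)"
  have j1: "N + 1 \<le> j" unfolding j_def by (rule le_prod_encode_2)
  have jj: "j < 2 ^ j" by (rule less_exp)
  have "N \<le> 2^j" using j1 jj by linarith
  moreover have "Phi \<gamma> \<alpha> (2^j) \<noteq> Phi \<gamma> \<beta> (2^j)"
    using Phi_free[of j] j1 assms unfolding j_def by simp
  ultimately show ?thesis by blast
qed

lemma Phi_inj: "inj (Phi \<gamma>)"
proof (rule injI)
  fix \<alpha> \<beta> assume e: "Phi \<gamma> \<alpha> = Phi \<gamma> \<beta>"
  show "\<alpha> = \<beta>"
  proof (rule ccontr)
    assume "\<alpha> \<noteq> \<beta>"
    then obtain k where "\<alpha> k \<noteq> \<beta> k" by blast
    then show False using Phi_diff[of \<alpha> k \<beta> 0 \<gamma>] e by simp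
  qed
qed

context hs
begin

lemma limsup_g:
  assumes "0 < d" "\<And>N. \<exists>i\<ge>N. d \<le> dist ((g^^i) x) ((g^^i) y)"
  shows "0 < limsup (\<lambda>n. ereal (dist ((f^^n) x) ((f^^n) y)))"
proof (rule limsup_pos[OF assms(1)])
  fix N
  obtain i where i: "i \<ge> N" "d \<le> dist ((g^^i) x) ((g^^i) y)" using assms(2) by blast
  then show "\<exists>n\<ge>N. d \<le> dist ((f^^n) x) ((f^^n) y)"
    by (intro exI[of _ "2*i"]) (auto simp: gn_f)
qed

lemma periodic_g:
  assumes "periodic_pt f q"
  obtains m where "0 < m" "(g^^m) q = q"
proof -
  obtain m where m: "0 < m" "(f^^m) q = q" using assms unfolding periodic_pt_def by blast
  have "(g^^m) q = ((f^^m)^^2) q" unfolding gn_f funpow_mult by (simp add: mult.commute)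
  also have "\<dots> = q" using m by (simp add: numeral_2_eq_2)
  finally show ?thesis using m(1) that by blast
qed

lemma periodic_g_iter:
  assumes "(g^^m) q = q"
  shows "(g^^(i + t*m)) q = (g^^i) q"
proof (induction t)
  case 0 then show ?case by simp
next
  case (Suc t)
  have e: "i + Suc t * m = (i + t*m) + m" by simp
  have "(g^^(i + Suc t * m)) q = (g^^(i + t*m)) ((g^^m) q)"
    unfolding e by (rule gn_add)
  then show ?case using assms Suc by simp
qed

lemma LY: "Y \<subseteq> X \<Longrightarrow> LY_chaotic X f"
proof -
  assume YX: "Y \<subseteq> X"
  obtain \<gamma> where \<gamma>: "\<gamma> \<notin> Nset" using cyl_avoid[OF countable_N, of 0] by blast
  obtain w0 where w0: "fib \<gamma> = {w0}" using fib_single[OF \<gamma>] by blast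
  define pt where "pt \<beta> = (SOME x. x \<in> fib \<beta>)" for \<beta>
  have pt: "pt \<beta> \<in> Y" "h (pt \<beta>) = \<beta>" for \<beta>
  proof -
    have "pt \<beta> \<in> fib \<beta>" unfolding pt_def using fib_ne[of \<beta>] by (simp add: some_in_eq)
    then show "pt \<beta> \<in> Y" "h (pt \<beta>) = \<beta>" using fib_iff by auto
  qed
  define B0 where "B0 = {\<alpha>. EPs (Phi \<gamma> \<alpha>)}"
  have cB0: "countable B0"
  proof -
    have "Phi \<gamma> ` B0 \<subseteq> {\<alpha>. EPs \<alpha>}" unfolding B0_def by auto
    then have "countable (Phi \<gamma> ` B0)" using countable_EP by (rule countable_subset)
    moreover have "inj_on (Phi \<gamma>) B0" using Phi_inj by (rule inj_on_subset) simp
    ultimately show ?thesis by (intro countable_image_inj_on[of "Phi \<gamma>" B0])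
  qed
  define P where "P \<alpha> = pt (Phi \<gamma> \<alpha>)" for \<alpha>
  define S where "S = P ` (UNIV - B0)"
  have injP: "inj P"
  proof (rule injI)
    fix \<alpha> \<beta> assume "P \<alpha> = P \<beta>"
    then have "h (P \<alpha>) = h (P \<beta>)" by simp
    then have "Phi \<gamma> \<alpha> = Phi \<gamma> \<beta>" unfolding P_def pt by simp
    then show "\<alpha> = \<beta>" using Phi_inj by (simp add: inj_eq)
  qed
  have hP: "h (P \<alpha>) = Phi \<gamma> \<alpha>" and PY: "P \<alpha> \<in> Y" for \<alpha> unfolding P_def using pt by auto
  have unc: "uncountable S"
  proof
    assume "countable S"
    moreover have "inj_on P (UNIV - B0)" using injP by (rule inj_on_subset) simp
    ultimately have "countable (UNIV - B0)" unfolding S_def by (intro countable_image_inj_on[of P])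
    then show False using uncountable_minus_countable[OF uncountable_seqs cB0] by simp
  qed
  have SX: "S \<subseteq> X" unfolding S_def using PY YX by auto
  have pair: "limsup (\<lambda>n. ereal (dist ((f^^n) x) ((f^^n) y))) > 0 \<and>
            liminf (\<lambda>n. ereal (dist ((f^^n) x) ((f^^n) y))) = 0"
    if x: "x \<in> S" and y: "y \<in> S" and xy: "x \<noteq> y" for x y
  proof -
    obtain \<alpha> \<beta> where ab: "x = P \<alpha>" "y = P \<beta>" using x y unfolding S_def by blast
    then have "\<alpha> \<noteq> \<beta>" using xy by blast
    then obtain k where k: "\<alpha> k \<noteq> \<beta> k" by blast
    have ls: "0 < limsup (\<lambda>n. ereal (dist ((f^^n) x) ((f^^n) y)))"
    proof (rule limsup_g[OF delta_pos])
      fix N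
      obtain t where t: "t \<ge> N" "Phi \<gamma> \<alpha> t \<noteq> Phi \<gamma> \<beta> t" using Phi_diff[of \<alpha> k \<beta> N \<gamma>, OF k] by blast
      then have "h x t \<noteq> h y t" using ab hP by simp
      then have "\<delta> \<le> dist ((g^^t) x) ((g^^t) y)" using delta_sepn ab PY by blast
      then show "\<exists>i\<ge>N. \<delta> \<le> dist ((g^^i) x) ((g^^i) y)" using t by blast
    qed
    have li: "liminf (\<lambda>n. ereal (dist ((f^^n) x) ((f^^n) y))) = 0"
    proof (rule liminf_zero)
      fix n show "0 \<le> dist ((f^^n) x) ((f^^n) y)" by simp
    next
      fix e :: real and N :: nat assume e: "0 < e"
      obtain L where L: "\<forall>z\<in>Y. (\<forall>i<L. h z i = \<gamma> i) \<longrightarrow> dist z w0 < e/2"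
        using cyl_close[OF w0, of "e/2"] e by auto
      define j where "j = L + N + 1"
      define n :: nat where "n = 2^j + 1"
      have jl: "j < 2^j" by (rule less_exp)
      have close: "dist ((g^^n) (P \<alpha>')) w0 < e/2" for \<alpha>'
      proof -
        have "\<forall>i<L. h ((g^^n) (P \<alpha>')) i = \<gamma> i"
        proof (intro allI impI)
          fix i assume "i < L"
          then have i: "i < 2^j - 1" using jl unfolding j_def by simp
          have "h ((g^^n) (P \<alpha>')) i = Phi \<gamma> \<alpha>' (i + n)" using h_shift hP by simp
          also have "i + n = 2^j + 1 + i" unfolding n_def by simp
          also have "Phi \<gamma> \<alpha>' (2^j + 1 + i) = \<gamma> i"
            by (rule Phi_blk) (use i in \<open>auto simp: j_def\<close>)
          finally show "h ((g^^n) (P \<alpha>')) i = \<gamma> i" .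
        qed
        then show ?thesis using L gnY[OF PY] by blast
      qed
      have "dist ((g^^n) x) ((g^^n) y) < e"
        using close[of \<alpha>] close[of \<beta>] ab dist_triangle_half_l by blast
      moreover have "N \<le> 2*n" using jl unfolding n_def j_def by simp
      ultimately show "\<exists>n'\<ge>N. dist ((f^^n') x) ((f^^n') y) < e"
        by (intro exI[of _ "2*n"]) (simp add: gn_f)
    qed
    show ?thesis using ls li by simp
  qed
  have per: "limsup (\<lambda>n. ereal (dist ((f^^n) x) ((f^^n) q))) > 0"
    if x: "x \<in> S" and q: "periodic_pt f q" for x q
  proof -
    obtain \<alpha> where a: "x = P \<alpha>" "\<alpha> \<notin> B0" using x unfolding S_def by blast
    obtain m where m: "0 < m" "(g^^m) q = q" using periodic_g[OF q] by blast
    show ?thesis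
    proof (cases "q \<in> Y")
      case True
      have hq: "h q (i + m) = h q i" for i using h_shift[of m q i] m(2) by simp
      show ?thesis
      proof (rule limsup_g[OF delta_pos])
        fix N
        have "\<exists>i\<ge>N. Phi \<gamma> \<alpha> i \<noteq> h q i"
        proof (rule ccontr)
          assume "\<not> ?thesis"
          then have eq: "\<forall>i\<ge>N. Phi \<gamma> \<alpha> i = h q i" by auto
          have "EPs (Phi \<gamma> \<alpha>)" unfolding EPs_def
            by (rule exI[of _ N], rule exI[of _ m]) (use m eq hq in auto)
          then show False using a(2) unfolding B0_def by simp
        qed
        then obtain i where i: "i \<ge> N" "h x i \<noteq> h q i" using a hP by auto
        then have "\<delta> \<le> dist ((g^^i) x) ((g^^i) q)" using delta_sepn a PY True by blast
        then show "\<exists>i\<ge>N. \<delta> \<le> dist ((g^^i) x) ((g^^i) q)" using i by blast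
      qed
    next
      case False
      then obtain i0 where i0: "(g^^i0) q \<notin> {u..v}" unfolding Y_def by blast
      define z0 where "z0 = (g^^i0) q"
      define d where "d = (if z0 < u then u - z0 else z0 - v)"
      have dpos: "0 < d" using i0 unfolding d_def z0_def by auto
      have dd: "d \<le> dist w z0" if "w \<in> {u..v}" for w
        using that i0 unfolding d_def z0_def dist_real_def by auto
      show ?thesis
      proof (rule limsup_g[OF dpos])
        fix N
        have "(g^^(i0 + N*m)) q = z0" using periodic_g_iter[OF m(2)] unfolding z0_def by blast
        moreover have "(g^^(i0 + N*m)) x \<in> {u..v}" using gnY[OF PY] a Y_sub by blast
        ultimately have "d \<le> dist ((g^^(i0 + N*m)) x) ((g^^(i0 + N*m)) q)" using dd by simp
        moreover have "N \<le> i0 + N*m"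
        proof -
          have "N * 1 \<le> N * m" using m(1) by (intro mult_le_mono2) simp
          then show ?thesis by linarith
        qed
        ultimately show "\<exists>i\<ge>N. d \<le> dist ((g^^i) x) ((g^^i) q)" by blast
      qed
    qed
  qed
  show ?thesis unfolding LY_chaotic_def
  proof (intro exI[of _ S] conjI ballI impI)
    show "S \<subseteq> X" by (rule SX)
    show "uncountable S" by (rule unc)
  next
    fix x y assume "x \<in> S" "y \<in> S" "x \<noteq> y"
    then show "0 < limsup (\<lambda>n. ereal (dist ((f^^n) x) ((f^^n) y)))" using pair by blast
  next
    fix x y assume "x \<in> S" "y \<in> S" "x \<noteq> y"
    then show "liminf (\<lambda>n. ereal (dist ((f^^n) x) ((f^^n) y))) = 0" using pair by blast
  next
    fix x q assume "x \<in> S" "q \<in> X" "periodic_pt f q"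
    then show "0 < limsup (\<lambda>n. ereal (dist ((f^^n) x) ((f^^n) q)))" using per by blast
  qed
qed

end



lemma monot_subset: "monot T \<phi> \<Longrightarrow> S \<subseteq> T \<Longrightarrow> monot S \<phi>"
  unfolding monot_def by blast

context hs
begin

lemma cont_eps:
  assumes "0 < r"
  shows "\<exists>s>0. \<forall>z. dist z z0 < s \<longrightarrow> dist (f z) (f z0) < r"
proof -
  have "eventually (\<lambda>z. dist (f z) (f z0) < r) (at z0)"
    using contf[of z0] assms by (auto intro: tendstoD simp: isCont_def)
  then obtain s where s: "s > 0" "\<forall>z. z \<noteq> z0 \<and> dist z z0 < s \<longrightarrow> dist (f z) (f z0) < r"
    unfolding eventually_at by auto
  have "\<forall>z. dist z z0 < s \<longrightarrow> dist (f z) (f z0) < r"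
  proof (intro allI impI)
    fix z assume "dist z z0 < s"
    then show "dist (f z) (f z0) < r" using s assms by (cases "z = z0") auto
  qed
  then show ?thesis using s(1) by blast
qed

definition S1 where "S1 = {x \<in> Y. h x \<notin> Nset}"
definition Z where "Z = closure S1"
definition YD where "YD = Z \<union> f ` Z"

lemma S1_fib: "x \<in> S1 \<Longrightarrow> fib (h x) = {x}"
proof -
  assume x: "x \<in> S1"
  obtain x' where x': "fib (h x) = {x'}" using fib_single x unfolding S1_def by blast
  have "x \<in> fib (h x)" using x fib_iff unfolding S1_def by blast
  then have "x = x'" using x' by simp
  then show ?thesis using x' by simp
qed

lemma prefix_S1: "\<exists>y\<in>S1. \<forall>i<L. h y i = w i"
proof -
  obtain \<beta> where b: "\<forall>i<L. \<beta> i = w i" "\<beta> \<notin> Nset" using cyl_avoid[OF countable_N] by blast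
  obtain y where "y \<in> fib \<beta>" using fib_ne by blast
  then have "y \<in> Y" "h y = \<beta>" using fib_iff by auto
  then show ?thesis using b unfolding S1_def by auto
qed

lemma Nset_shift: "shift \<alpha> \<in> Nset \<Longrightarrow> \<alpha> \<in> Nset"
proof -
  assume "shift \<alpha> \<in> Nset"
  then obtain y1 y2 where y: "y1 \<in> fib (shift \<alpha>)" "y2 \<in> fib (shift \<alpha>)" "y1 < y2"
    unfolding Nset_def by blast
  have yr: "y1 \<in> {u..v}" "y2 \<in> {u..v}" using y fib_iff Y_sub by auto
  obtain x1 where x1: "x1 \<in> J (\<alpha> 0)" "g x1 = y1" using covJ yr(1) by blast
  obtain x2 where x2: "x2 \<in> J (\<alpha> 0)" "g x2 = y2" using covJ yr(2) by blast
  have lift: "x \<in> fib \<alpha>" if "x \<in> J (\<alpha> 0)" "g x \<in> fib (shift \<alpha>)" for x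
    unfolding fib_def
  proof (intro CollectI allI)
    fix i show "(g^^i) x \<in> J (\<alpha> i)"
    proof (cases i)
      case 0 then show ?thesis using that by simp
    next
      case (Suc j)
      then show ?thesis using that unfolding fib_def shift_def by (simp add: gn_Suc del: funpow.simps)
    qed
  qed
  have f1: "x1 \<in> fib \<alpha>" "x2 \<in> fib \<alpha>" using lift x1 x2 y by auto
  have "x1 \<noteq> x2" using x1 x2 y(3) by auto
  then have "x1 < x2 \<or> x2 < x1" by linarith
  then show "\<alpha> \<in> Nset" using f1 unfolding Nset_def by blast
qed

lemma gS1: "x \<in> S1 \<Longrightarrow> g x \<in> S1"
  unfolding S1_def using gY h_g Nset_shift by auto

lemma Z_sub: "Z \<subseteq> Y"
  unfolding Z_def S1_def by (rule closure_minimal) (auto simp: closed_Y)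

lemma S1_Z: "S1 \<subseteq> Z" unfolding Z_def by (rule closure_subset)

lemma closed_Z: "closed Z" unfolding Z_def by simp

lemma compact_Z: "compact Z"
  using closed_Z Z_sub compact_Y by (meson compact_eq_bounded_closed bounded_subset)

lemma gZ: "g ` Z \<subseteq> Z"
  unfolding Z_def
proof (rule image_closure_subset)
  show "continuous_on (closure S1) g" by (intro continuous_at_imp_continuous_on ballI contg)
  show "closed (closure S1)" by simp
  show "g ` S1 \<subseteq> closure S1" using gS1 closure_subset by blast
qed

lemma gnZ: "x \<in> Z \<Longrightarrow> (g^^n) x \<in> Z"
  by (induction n) (use gZ in auto)

lemma S1_ne: "S1 \<noteq> {}" using prefix_S1[of 0] by blast

lemma K1:
  assumes "x0 \<in> S1" "0 < e"
  shows "\<exists>L\<ge>M. \<forall>y\<in>Y. (\<forall>i<L. h y i = h x0 i) \<longrightarrow> dist y x0 < e"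
  by (rule cyl_close_ge[OF S1_fib[OF assms(1)] assms(2)])

lemma fk_YD: "z \<in> Z \<Longrightarrow> k \<le> 1 \<Longrightarrow> (f^^k) z \<in> YD"
  unfolding YD_def by (cases k) auto

lemma reduce:
  assumes q: "q \<in> YD" and T: "open T" "q \<in> T"
  shows "\<exists>x0\<in>S1. \<exists>e>0. \<exists>k\<le>1. \<forall>z\<in>Z. dist z x0 < e \<longrightarrow> (f^^k) z \<in> T"
proof (cases "q \<in> Z")
  case True
  obtain r where r: "r > 0" "ball q r \<subseteq> T" using T open_contains_ball by blast
  obtain x0 where x0: "x0 \<in> S1" "dist x0 q < r/2"
    using True r(1) unfolding Z_def closure_approachable by (meson half_gt_zero)
  have "\<forall>z\<in>Z. dist z x0 < r/2 \<longrightarrow> (f^^0) z \<in> T"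
  proof (intro ballI impI)
    fix z assume "z \<in> Z" "dist z x0 < r/2"
    then have "dist q z < r" using x0(2) dist_triangle_half_r[of x0 q r z] by (simp add: dist_commute)
    then show "(f^^0) z \<in> T" using r(2) by auto
  qed
  then show ?thesis using x0(1) r(1) by (meson half_gt_zero le0)
next
  case False
  then obtain z0 where z0: "z0 \<in> Z" "q = f z0" using q unfolding YD_def by blast
  obtain r where r: "r > 0" "ball q r \<subseteq> T" using T open_contains_ball by blast
  obtain s where s: "s > 0" "\<forall>z. dist z z0 < s \<longrightarrow> dist (f z) (f z0) < r" using cont_eps[OF r(1)] by blast
  obtain x0 where x0: "x0 \<in> S1" "dist x0 z0 < s/2"
    using z0(1) s(1) unfolding Z_def closure_approachable by (meson half_gt_zero)
  have "\<forall>z\<in>Z. dist z x0 < s/2 \<longrightarrow> (f^^1) z \<in> T"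
  proof (intro ballI impI)
    fix z assume "z \<in> Z" "dist z x0 < s/2"
    then have "dist z z0 < s" using x0(2) dist_triangle[of z z0 x0] by linarith
    then have "dist (f z) q < r" using s z0 by simp
    then show "(f^^1) z \<in> T" using r(2) by (auto simp: dist_commute)
  qed
  then show ?thesis using x0(1) s(1) by (meson half_gt_zero order_refl)
qed

lemma transitive:
  assumes U: "openin (top_of_set YD) U" "U \<noteq> {}" and V: "openin (top_of_set YD) V" "V \<noteq> {}"
  shows "\<exists>n>0. (f^^n) ` U \<inter> V \<noteq> {}"
proof -
  obtain TU where TU: "open TU" "U = YD \<inter> TU" using U(1) openin_open by blast
  obtain TV where TV: "open TV" "V = YD \<inter> TV" using V(1) openin_open by blast
  obtain q where q: "q \<in> U" using U(2) by blast
  obtain q' where q': "q' \<in> V" using V(2) by blast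
  obtain x0 e k where x0: "x0 \<in> S1" "e > 0" "k \<le> 1" "\<forall>z\<in>Z. dist z x0 < e \<longrightarrow> (f^^k) z \<in> TU"
    using reduce[of q TU] q TU by blast
  obtain x1 e' k' where x1: "x1 \<in> S1" "e' > 0" "k' \<le> 1" "\<forall>z\<in>Z. dist z x1 < e' \<longrightarrow> (f^^k') z \<in> TV"
    using reduce[of q' TV] q' TV by blast
  obtain L where L: "L \<ge> 1" "\<forall>y\<in>Y. (\<forall>i<L. h y i = h x0 i) \<longrightarrow> dist y x0 < e"
    using K1[OF x0(1,2)] by blast
  obtain L' where L': "\<forall>y\<in>Y. (\<forall>i<L'. h y i = h x1 i) \<longrightarrow> dist y x1 < e'"
    using K1[OF x1(1,2)] by blast
  define w where "w i = (if i < L then h x0 i else h x1 (i - L))" for i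
  obtain y where y: "y \<in> S1" "\<forall>i<L+L'. h y i = w i" using prefix_S1 by blast
  have yY: "y \<in> Y" and yZ: "y \<in> Z" using y(1) S1_Z Z_sub by auto
  have "dist y x0 < e" using L(2) yY y(2) unfolding w_def by simp
  then have A: "(f^^k) y \<in> U" using x0(4) yZ fk_YD[OF yZ x0(3)] TU(2) by blast
  define y' where "y' = (g^^L) y"
  have y'Z: "y' \<in> Z" unfolding y'_def using gnZ yZ by blast
  have "\<forall>i<L'. h y' i = h x1 i"
  proof (intro allI impI)
    fix i assume "i < L'"
    then have "h y (i + L) = w (i + L)" using y(2) by simp
    then show "h y' i = h x1 i" unfolding y'_def h_shift w_def by simp
  qed
  then have "dist y' x1 < e'" using L' y'Z Z_sub by blast
  then have B: "(f^^k') y' \<in> V" using x1(4) y'Z fk_YD[OF y'Z x1(3)] TV(2) by blast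
  define n where "n = 2*L + k' - k"
  have npos: "n > 0" unfolding n_def using L(1) x0(3) by simp
  have "(f^^n) ((f^^k) y) = (f^^(n + k)) y" by (simp add: funpow_add)
  also have "n + k = k' + 2*L" unfolding n_def using L(1) x0(3) by simp
  also have "(f^^(k' + 2*L)) y = (f^^k') y'" unfolding y'_def gn_f by (simp add: funpow_add)
  finally have "(f^^n) ((f^^k) y) \<in> V" using B by simp
  then have "(f^^n) ` U \<inter> V \<noteq> {}" using A by blast
  then show ?thesis using npos by blast
qed

lemma closed_fib: "closed (fib \<alpha>)"
proof -
  have "fib \<alpha> = (\<Inter>i. (g^^i) -` J (\<alpha> i))" unfolding fib_def by auto
  also have "closed \<dots>"
    by (intro closed_INT ballI continuous_closed_vimage) (auto simp: contgn J_closed)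
  finally show ?thesis .
qed

lemma g_fib_shift: "x \<in> fib \<alpha> \<Longrightarrow> g x \<in> fib (shift \<alpha>)"
  unfolding fib_def shift_def by (auto simp: gn_Suc[symmetric] simp del: funpow.simps)

lemma mon_fib: "monot (fib \<alpha>) (g^^n)"
proof (induction n arbitrary: \<alpha>)
  case 0 then show ?case unfolding monot_def by simp
next
  case (Suc n)
  have sub: "fib \<alpha> \<subseteq> J (\<alpha> 0)" unfolding fib_def by (auto dest: spec[of _ 0])
  have m1: "monot (fib \<alpha>) g" by (rule monot_subset[OF monot_J sub])
  have im: "g ` fib \<alpha> \<subseteq> fib (shift \<alpha>)" using g_fib_shift by blast
  have "monot (fib \<alpha>) ((g^^n) \<circ> g)" by (rule monot_comp[OF m1 im Suc.IH])
  then show ?case by (simp add: funpow_Suc_right comp_def del: funpow.simps)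
qed

lemma per_near:
  assumes x0: "x0 \<in> S1" and e: "0 < e"
  shows "\<exists>q\<in>Z. dist q x0 < e \<and> periodic_pt f q"
proof -
  obtain L where L: "L \<ge> 1" "\<forall>y\<in>Y. (\<forall>i<L. h y i = h x0 i) \<longrightarrow> dist y x0 < e"
    using K1[OF x0 e] by blast
  define \<pi> where "\<pi> i = h x0 (i mod L)" for i
  have \<pi>L: "\<pi> (i + L) = \<pi> i" for i unfolding \<pi>_def by simp
  define K where "K = Z \<inter> fib \<pi>"
  define S where "S n = Z \<inter> {x. \<forall>i<n. (g^^i) x \<in> J (\<pi> i)}" for n
  have cl: "closed (S n)" for n unfolding S_def by (intro closed_Int closed_Z closed_cyl)
  have ne: "S n \<noteq> {}" for n
  proof -
    obtain y where y: "y \<in> S1" "\<forall>i<n. h y i = \<pi> i" using prefix_S1 by blast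
    have "\<forall>i<n. (g^^i) y \<in> J (\<pi> i)"
    proof (intro allI impI)
      fix i assume "i < n"
      then have "h y i = \<pi> i" using y(2) by blast
      then show "(g^^i) y \<in> J (\<pi> i)" using hJ[of y i] y(1) S1_def by simp
    qed
    then have "y \<in> S n" unfolding S_def using y(1) S1_Z by auto
    then show ?thesis by blast
  qed
  have mo: "m \<le> n \<Longrightarrow> S n \<subseteq> S m" for m n unfolding S_def by auto
  have bd: "bounded (S 0)"
    using bounded_subset[of "{u..v}" "S 0"] Z_sub Y_sub unfolding S_def by auto
  obtain a where a: "\<And>n. a \<in> S n" using nest_point[of S, OF cl ne mo bd] by blast
  have aK: "a \<in> K" unfolding K_def fib_def
  proof (intro IntI CollectI allI)
    show "a \<in> Z" using a[of 0] unfolding S_def by blast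
    fix i show "(g^^i) a \<in> J (\<pi> i)" using a[of "Suc i"] unfolding S_def by simp
  qed
  define \<psi> where "\<psi> = g^^L"
  have \<psi>fib: "\<psi> x \<in> fib \<pi>" if "x \<in> fib \<pi>" for x
    unfolding fib_def
  proof (intro CollectI allI)
    fix i
    have "(g^^(i + L)) x \<in> J (\<pi> (i + L))" using that unfolding fib_def by blast
    then show "(g^^i) (\<psi> x) \<in> J (\<pi> i)" unfolding \<psi>_def \<pi>L gn_add by simp
  qed
  have \<psi>K: "\<psi> x \<in> K" if "x \<in> K" for x
    using that \<psi>fib gnZ unfolding K_def \<psi>_def by blast
  have mon: "monot (fib \<pi>) \<psi>" unfolding \<psi>_def by (rule mon_fib)
  define \<phi> where "\<phi> = g^^(2*L)"
  have \<phi>\<psi>: "\<phi> x = \<psi> (\<psi> x)" for x unfolding \<phi>_def \<psi>_def using gn_add[of L L x] by (simp add: mult_2)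
  have \<phi>K: "\<phi> x \<in> K" if "x \<in> K" for x using \<psi>K that \<phi>\<psi> by simp
  have \<phi>mono: "\<phi> x \<le> \<phi> y" if "x \<in> K" "y \<in> K" "x \<le> y" for x y
    unfolding \<phi>\<psi> using monot_sq[OF mon _ _ _ that(3)] that \<psi>fib unfolding K_def by blast
  have Kc: "compact K"
    unfolding K_def using compact_Z closed_fib by (rule compact_Int_closed)
  have Kne: "K \<noteq> {}" using aK by blast
  obtain y0 where y0: "y0 \<in> K" "\<forall>y\<in>K. y0 \<le> y"
    using continuous_attains_inf[OF Kc Kne, of "\<lambda>x. x"] by auto
  define t where "t n = (\<phi>^^n) y0" for n
  have tK: "t n \<in> K" for n unfolding t_def by (induction n) (use y0 \<phi>K in auto)
  have tS: "t (Suc n) = \<phi> (t n)" for n unfolding t_def by simp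
  have tinc: "t n \<le> t (Suc n)" for n
  proof (induction n)
    case 0 then show ?case using y0 tK[of 1] unfolding t_def by simp
  next
    case (Suc n) then show ?case using \<phi>mono[OF tK tK] tS by metis
  qed
  have inc: "incseq t" using tinc by (simp add: incseq_SucI)
  have bdd: "bdd_above (range t)"
    using tK K_def Z_sub Y_sub by (intro bdd_aboveI[of _ v]) fastforce
  define l where "l = (SUP i. t i)"
  have lim: "t \<longlonglongrightarrow> l" unfolding l_def by (rule LIMSEQ_incseq_SUP[OF bdd inc])
  have lK: "l \<in> K" using closed_sequentially[OF compact_imp_closed[OF Kc] tK lim] .
  have "(\<lambda>n. \<phi> (t n)) \<longlonglongrightarrow> \<phi> l"
    using isCont_tendsto_compose[OF _ lim] contgn unfolding \<phi>_def by blast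
  moreover have "(\<lambda>n. \<phi> (t n)) \<longlonglongrightarrow> l" unfolding tS[symmetric] using lim by (rule LIMSEQ_Suc)
  ultimately have fixl: "\<phi> l = l" by (rule LIMSEQ_unique)
  have "(f^^(2*(2*L))) l = l" using fixl unfolding \<phi>_def gn_f .
  then have per: "periodic_pt f l" unfolding periodic_pt_def using L(1) by (intro exI[of _ "2*(2*L)"]) simp
  have lY: "l \<in> Y" and hl: "h l = \<pi>" using lK fib_iff unfolding K_def by auto
  have "\<forall>i<L. h l i = h x0 i" unfolding hl \<pi>_def by simp
  then have "dist l x0 < e" using L(2) lY by blast
  then show ?thesis using lK per unfolding K_def by blast
qed

lemma per_dense: "YD \<subseteq> closure {q \<in> YD. periodic_pt f q}"
proof
  fix q assume q: "q \<in> YD"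
  show "q \<in> closure {q \<in> YD. periodic_pt f q}"
    unfolding closure_approachable
  proof (intro allI impI)
    fix \<epsilon> :: real assume \<epsilon>: "0 < \<epsilon>"
    obtain x0 e k where x0: "x0 \<in> S1" "e > 0" "k \<le> 1" "\<forall>z\<in>Z. dist z x0 < e \<longrightarrow> (f^^k) z \<in> ball q \<epsilon>"
      using reduce[OF q, of "ball q \<epsilon>"] \<epsilon> by auto
    obtain q' where q': "q' \<in> Z" "dist q' x0 < e" "periodic_pt f q'" using per_near[OF x0(1,2)] by blast
    obtain m where m: "m > 0" "(f^^m) q' = q'" using q'(3) unfolding periodic_pt_def by blast
    have "(f^^m) ((f^^k) q') = (f^^k) ((f^^m) q')" by (metis add.commute comp_apply funpow_add)
    then have "periodic_pt f ((f^^k) q')" unfolding periodic_pt_def using m by auto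
    moreover have "(f^^k) q' \<in> YD" using fk_YD[OF q'(1) x0(3)] .
    moreover have "dist ((f^^k) q') q < \<epsilon>" using x0(4) q' by (auto simp: dist_commute)
    ultimately show "\<exists>y\<in>{q \<in> YD. periodic_pt f q}. dist y q < \<epsilon>" by blast
  qed
qed

lemma sensZ:
  assumes q: "q \<in> Z" and e: "0 < e"
  shows "\<exists>y\<in>Z. \<exists>L\<ge>1. dist q y < e \<and> \<delta> \<le> dist ((g^^L) q) ((g^^L) y)"
proof -
  obtain x0 where x0: "x0 \<in> S1" "dist x0 q < e/2"
    using q e unfolding Z_def closure_approachable by (meson half_gt_zero)
  obtain L where L: "L \<ge> 1" "\<forall>y\<in>Y. (\<forall>i<L. h y i = h x0 i) \<longrightarrow> dist y x0 < e/2"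
  proof -
    have e2: "0 < e/2" using e by simp
    show ?thesis using K1[OF x0(1) e2, of 1] that by blast
  qed
  define w where "w i = (if i < L then h x0 i else \<not> h q L)" for i
  obtain y where y: "y \<in> S1" "\<forall>i<L+1. h y i = w i" using prefix_S1 by blast
  have yY: "y \<in> Y" and yZ: "y \<in> Z" using y(1) S1_Z Z_sub by auto
  have "dist y x0 < e/2" using L(2) yY y(2) unfolding w_def by simp
  then have "dist q y < e" using x0(2) dist_triangle_half_r[of x0 q e y] by (simp add: dist_commute)
  moreover have "h q L \<noteq> h y L" using y(2) unfolding w_def by simp
  then have "\<delta> \<le> dist ((g^^L) q) ((g^^L) y)" using delta_sepn q Z_sub yY by blast
  ultimately show ?thesis using yZ L(1) by blast
qed

lemma sensitive: "x \<in> YD \<Longrightarrow> 0 < e \<Longrightarrow> \<exists>y\<in>YD. \<exists>n. dist x y < e \<and> dist ((f^^n) x) ((f^^n) y) > \<delta>/2"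
proof -
  assume x: "x \<in> YD" and e: "0 < e"
  have d2: "\<delta>/2 < \<delta>" using delta_pos by simp
  show ?thesis
  proof (cases "x \<in> Z")
    case True
    obtain y L where y: "y \<in> Z" "L \<ge> 1" "dist x y < e" "\<delta> \<le> dist ((g^^L) x) ((g^^L) y)"
      using sensZ[OF True e] by blast
    have "dist ((f^^(2*L)) x) ((f^^(2*L)) y) > \<delta>/2" using y(4) d2 unfolding gn_f by simp
    moreover have "y \<in> YD" using y(1) unfolding YD_def by blast
    ultimately show ?thesis using y(3) by blast
  next
    case False
    then obtain z where z: "z \<in> Z" "x = f z" using x unfolding YD_def by blast
    obtain s where s: "s > 0" "\<forall>z'. dist z' z < s \<longrightarrow> dist (f z') (f z) < e" using cont_eps[OF e] by blast
    obtain y L where y: "y \<in> Z" "L \<ge> 1" "dist z y < s" "\<delta> \<le> dist ((g^^L) z) ((g^^L) y)"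
      using sensZ[OF z(1) s(1)] by blast
    have fy: "f y \<in> YD" using y(1) unfolding YD_def by blast
    have dxy: "dist x (f y) < e" using s(2) y(3) z(2) by (simp add: dist_commute)
    have e2: "Suc (2*L - 1) = 2*L" using y(2) by simp
    have "(f^^(2*L - 1)) (f w) = (f^^(2*L)) w" for w
      using funpow_Suc_right[of "2*L - 1" f] e2 by (metis comp_apply)
    then have "dist ((f^^(2*L - 1)) x) ((f^^(2*L - 1)) (f y)) > \<delta>/2"
      using y(4) d2 z(2) unfolding gn_f by simp
    then show ?thesis using fy dxy by blast
  qed
qed

lemma Devaney: "Y \<subseteq> X \<Longrightarrow> f ` X \<subseteq> X \<Longrightarrow> D_chaotic X f"
proof -
  assume YX: "Y \<subseteq> X" and fX: "f ` X \<subseteq> X"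
  have sub: "YD \<subseteq> X" unfolding YD_def using Z_sub YX fX by blast
  have ne: "YD \<noteq> {}" unfolding YD_def using S1_ne S1_Z by blast
  have cf: "continuous_on Z f" by (intro continuous_at_imp_continuous_on ballI contf)
  have cp: "compact YD" unfolding YD_def
    using compact_Z compact_continuous_image[OF cf compact_Z] by blast
  have inv: "f ` YD \<subseteq> YD"
  proof -
    have "f ` f ` Z \<subseteq> Z" using gZ unfolding g_def by (auto simp: numeral_2_eq_2)
    then show ?thesis unfolding YD_def by blast
  qed
  show ?thesis unfolding D_chaotic_def
  proof (intro exI[of _ YD] conjI allI impI)
    show "YD \<subseteq> X" by (rule sub)
    show "YD \<noteq> {}" by (rule ne)
    show "compact YD" by (rule cp)
    show "f ` YD \<subseteq> YD" by (rule inv)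
    show "YD \<subseteq> closure {p \<in> YD. periodic_pt f p}" by (rule per_dense)
  next
    fix U V assume "openin (top_of_set YD) U" "openin (top_of_set YD) V" "U \<noteq> {}" "V \<noteq> {}"
    then show "\<exists>n>0. (f^^n) ` U \<inter> V \<noteq> {}" using transitive by blast
  next
    show "\<exists>\<delta>'>0. \<forall>x\<in>YD. \<forall>e>0. \<exists>y\<in>YD. \<exists>n. dist x y < e \<and> \<delta>' < dist ((f^^n) x) ((f^^n) y)"
      using sensitive delta_pos by (intro exI[of _ "\<delta>/2"]) auto
  qed
qed

end



lemma fk_deriv:
  fixes r k :: real
  shows "((\<lambda>x. x\<^sup>2 * exp (r - x) + k) has_real_derivative (x * (2 - x) * exp (r - x))) (at x)"
  by (auto intro!: derivative_eq_intros simp: power2_eq_square algebra_simps)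

lemma fk_cont:
  fixes r k :: real
  shows "isCont (\<lambda>x. x\<^sup>2 * exp (r - x) + k) x"
  using fk_deriv DERIV_isCont by blast

lemma fk_mono:
  fixes r k :: real
  assumes "0 \<le> x" "x \<le> y" "y \<le> 2"
  shows "(\<lambda>x. x\<^sup>2 * exp (r - x) + k) x \<le> (\<lambda>x. x\<^sup>2 * exp (r - x) + k) y"
proof (rule DERIV_nonneg_imp_increasing_open[OF assms(2)])
  fix z :: real assume z: "x < z" "z < y"
  have "0 \<le> z * (2 - z) * exp (r - z)" using z assms by (intro mult_nonneg_nonneg) auto
  then show "\<exists>d. ((\<lambda>x. x\<^sup>2 * exp (r - x) + k) has_real_derivative d) (at z) \<and> 0 \<le> d"
    using fk_deriv by blast
next
  show "continuous_on {x..y} (\<lambda>x. x\<^sup>2 * exp (r - x) + k)"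
    by (intro continuous_at_imp_continuous_on ballI fk_cont)
qed

lemma fk_anti:
  fixes r k :: real
  assumes "2 \<le> x" "x \<le> y"
  shows "(\<lambda>x. x\<^sup>2 * exp (r - x) + k) y \<le> (\<lambda>x. x\<^sup>2 * exp (r - x) + k) x"
proof (rule DERIV_nonpos_imp_decreasing_open[OF assms(2)])
  fix z :: real assume z: "x < z" "z < y"
  have "z * (2 - z) \<le> 0" using z assms by (intro mult_nonneg_nonpos) auto
  then have "z * (2 - z) * exp (r - z) \<le> 0" using mult_nonpos_nonneg[OF _ exp_ge_zero] by blast
  then show "\<exists>d. ((\<lambda>x. x\<^sup>2 * exp (r - x) + k) has_real_derivative d) (at z) \<and> d \<le> 0"
    using fk_deriv by blast
next
  show "continuous_on {x..y} (\<lambda>x. x\<^sup>2 * exp (r - x) + k)"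
    by (intro continuous_at_imp_continuous_on ballI fk_cont)
qed

theorem theorem4p14:
  fixes r k c :: real and f :: "real \<Rightarrow> real"
  assumes "k \<ge> 0"
    and "f = (\<lambda>x. x\<^sup>2 * exp (r - x) + k)"
    and "c = 2"
    and "f (f c) < f (f (f c))" and "f (f (f c)) < c" and "c < f c"
  shows "f ` {f (f c) .. f c} \<subseteq> {f (f c) .. f c}
     \<and> LY_chaotic {f (f c) .. f c} f
     \<and> BC_chaotic {f (f c) .. f c} f
     \<and> D_chaotic {f (f c) .. f c} f"
proof -
  define b where "b = f 2"
  define a where "a = f b"
  have h1: "a < f a" and h2: "f a < 2" and h3: "2 < b"
    using assms(3-6) unfolding a_def b_def by auto
  have contf: "\<And>x. isCont f x" unfolding assms(2) by (rule fk_cont)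
  have mono: "\<And>x y. 0 \<le> x \<Longrightarrow> x \<le> y \<Longrightarrow> y \<le> 2 \<Longrightarrow> f x \<le> f y"
    unfolding assms(2) using fk_mono by blast
  have anti: "\<And>x y. 2 \<le> x \<Longrightarrow> x \<le> y \<Longrightarrow> f y \<le> f x"
    unfolding assms(2) using fk_anti by blast
  have fpos: "\<And>x. k \<le> f x" unfolding assms(2) by simp
  have a0: "0 \<le> a" unfolding a_def using fpos[of b] assms(1) by linarith
  have X: "{f (f c) .. f c} = {a..b}" unfolding a_def b_def assms(3) ..
  have inv: "f ` {a..b} \<subseteq> {a..b}"
  proof
    fix y assume "y \<in> f ` {a..b}"
    then obtain x where x: "x \<in> {a..b}" "y = f x" by blast
    show "y \<in> {a..b}"
    proof (cases "x \<le> 2")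
      case True
      then have "f a \<le> f x" "f x \<le> f 2" using mono a0 x by auto
      then show ?thesis using x h1 unfolding b_def by auto
    next
      case False
      then have "f b \<le> f x" "f x \<le> f 2" using anti x by auto
      then show ?thesis using x unfolding a_def b_def by auto
    qed
  qed
  have cont_on: "\<And>s t. continuous_on {s..t} f" by (intro continuous_at_imp_continuous_on ballI contf)
  have fa_ne2: "f a \<noteq> 2" using h2 by simp
  obtain p where p: "2 \<le> p" "p \<le> b" "f p = 2"
  proof -
    have "f b \<le> 2" "2 \<le> f 2" "2 \<le> b" using h1 h2 h3 unfolding a_def b_def by auto
    then show ?thesis using IVT2'[where f=f and a=2 and b=b and y=2] cont_on that by blast
  qed
  have p2: "2 < p" using p h3 unfolding b_def by (cases "p = 2") auto
  have pb: "p < b" using p h1 h2 unfolding a_def by (cases "p = b") auto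
  obtain u where u: "2 \<le> u" "u \<le> p" "f u = p"
  proof -
    have "f p \<le> p" "p \<le> f 2" "2 \<le> p" using p pb unfolding b_def by auto
    then show ?thesis using IVT2'[where f=f and a=2 and b=p and y=p] cont_on that by blast
  qed
  have up: "u < p" using u p p2 by (cases "u = p") auto
  obtain q where q: "a \<le> q" "q \<le> 2" "f q = 2"
  proof -
    have "f a \<le> 2" "2 \<le> f 2" "a \<le> 2" using h1 h2 h3 unfolding b_def by auto
    then show ?thesis using IVT'[where f=f and a=a and b=2 and y=2] cont_on that by blast
  qed
  have qa: "a < q" using q h2 by (cases "q = a") auto
  have q2: "q < 2" using q h3 unfolding b_def by (cases "q = 2") auto
  obtain v where v: "p \<le> v" "v \<le> b" "f v = q"
  proof -
    have "f b \<le> q" "q \<le> f p" "p \<le> b" using p pb q unfolding a_def by auto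
    then show ?thesis using IVT2'[where f=f and a=p and b=b and y=q] cont_on that by blast
  qed
  have pv: "p < v" using v p q2 by (cases "v = p") auto
  have vb: "v < b" using v qa unfolding a_def by (cases "v = b") auto
  have f2: "\<And>x. (f^^2) x = f (f x)" by (simp add: numeral_2_eq_2)
  have cg: "\<And>s t. continuous_on {s..t} (\<lambda>x. f (f x))"
    by (intro continuous_at_imp_continuous_on ballI isCont_o2[OF contf contf])
  interpret hs f u p v
  proof
    show "\<And>x. isCont f x" by (rule contf)
    show "u < p" by (rule up)
    show "p < v" by (rule pv)
    show "{u..v} \<subseteq> (f^^2) ` {u..p}"
    proof
      fix y assume y: "y \<in> {u..v}"
      have "f (f u) \<le> y" "y \<le> f (f p)" using y u p v unfolding b_def by auto
      then obtain x where "u \<le> x" "x \<le> p" "f (f x) = y" using IVT'[where f="\<lambda>x. f (f x)" and a=u and b=p and y=y, OF _ _ _ cg] up by auto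
      then show "y \<in> (f^^2) ` {u..p}" unfolding f2 by auto
    qed
    show "{u..v} \<subseteq> (f^^2) ` {p..v}"
    proof
      fix y assume y: "y \<in> {u..v}"
      have "f (f v) \<le> y" "y \<le> f (f p)" using y u p v q unfolding b_def by auto
      then obtain x where "p \<le> x" "x \<le> v" "f (f x) = y" using IVT2'[where f="\<lambda>x. f (f x)" and a=p and b=v and y=y, OF _ _ _ cg] pv by auto
      then show "y \<in> (f^^2) ` {p..v}" unfolding f2 by auto
    qed
    show "(f^^2) p \<notin> {u..v}" unfolding f2 using p vb unfolding b_def by auto
    show "\<And>x y. u \<le> x \<Longrightarrow> x \<le> y \<Longrightarrow> y \<le> p \<Longrightarrow> (f^^2) x \<le> (f^^2) y"
    proof -
      fix x y assume xy: "u \<le> x" "x \<le> y" "y \<le> p"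
      have "f y \<le> f x" using anti xy u by auto
      moreover have "f p \<le> f y" using anti xy u by auto
      ultimately show "(f^^2) x \<le> (f^^2) y" unfolding f2 using anti p by auto
    qed
    show "\<And>x y. p \<le> x \<Longrightarrow> x \<le> y \<Longrightarrow> y \<le> v \<Longrightarrow> (f^^2) y \<le> (f^^2) x"
    proof -
      fix x y assume xy: "p \<le> x" "x \<le> y" "y \<le> v"
      have "f y \<le> f x" using anti xy p2 by auto
      moreover have "f x \<le> f p" using anti xy p2 by auto
      moreover have "f v \<le> f y" using anti xy p2 by auto
      ultimately show "(f^^2) y \<le> (f^^2) x" unfolding f2 using mono p v q a0 by auto
    qed
  qed
  have YX: "Y \<subseteq> {a..b}"
  proof -
    have "a \<le> u" using a0 h2 h1 u by linarith
    then show ?thesis using Y_sub vb by auto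
  qed
  show ?thesis unfolding X using inv LY[OF YX] BC[OF YX] Devaney[OF YX inv] by blast
qed


end
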